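(* Let $d\ge 3$ and let $S$ be the set of vertices $(x,y,z)$ of $T_d$ with $x\ge1$, $z\ge1$, $y\le d-1$; the subgraph induced by $S$ is isomorphic to $T_{d-3}$ via $(x,y,z)\mapsto(x-1,y-2,z-1)$, with corners $(1,2,1)$, $(d-2,d-1,1)$, $(1,d-1,d-2)$. Then for every $v\in S$, $ecc_{T_d}(v)=ecc_{T_{d-3}}(v)+2$, where $ecc_{T_{d-3}}$ denotes eccentricity in the induced subgraph on $S$.
   Context: Let $\alpha_1=(1,0)$, $\alpha_2=(-\tfrac12,\tfrac{\sqrt3}{2})$. $T_d$ is the graph on $\{a\alpha_1+b\alpha_2 : a,b\in\mathbb Z,\ 0\le b\le a\le d\}$ with two vertices adjacent iff their Euclidean distance is $1$. Each vertex $a\alpha_1+b\alpha_2$ is given coordinates $(x,y,z)=(a-b,\,a,\,b)$, so $0\le x,y,z\le d$ and $y=x+z$; the corners are $(0,0,0)$, $(d,d,0)$, $(0,d,d)$. The eccentricity of a vertex is its maximum distance to the other vertices of the graph. *)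

theory Defs
  imports Complex_Main
begin

definition alpha1 :: complex where "alpha1 = 1"
definition alpha2 :: complex where "alpha2 = Complex (-1/2) (sqrt 3 / 2)"

definition tri_pt :: "int \<times> int \<Rightarrow> complex" where
  "tri_pt p = of_int (fst p) * alpha1 + of_int (snd p) * alpha2"

definition tri_V :: "nat \<Rightarrow> (int \<times> int) set" where
  "tri_V d = {(a, b). 0 \<le> b \<and> b \<le> a \<and> a \<le> int d}"

definition tri_adj :: "int \<times> int \<Rightarrow> int \<times> int \<Rightarrow> bool" where
  "tri_adj p q \<longleftrightarrow> cmod (tri_pt p - tri_pt q) = 1"

definition xyz :: "int \<times> int \<Rightarrow> int \<times> int \<times> int" where
  "xyz p = (fst p - snd p, fst p, snd p)"

definition is_walk :: "'a set \<Rightarrow> ('a \<Rightarrow> 'a \<Rightarrow> bool) \<Rightarrow> 'a list \<Rightarrow> bool" where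
  "is_walk V E ps \<longleftrightarrow> ps \<noteq> [] \<and> set ps \<subseteq> V \<and>
     (\<forall>i. Suc i < length ps \<longrightarrow> E (ps ! i) (ps ! Suc i))"

definition gdist :: "'a set \<Rightarrow> ('a \<Rightarrow> 'a \<Rightarrow> bool) \<Rightarrow> 'a \<Rightarrow> 'a \<Rightarrow> nat" where
  "gdist V E u v = (LEAST n. \<exists>ps. is_walk V E ps \<and> hd ps = u \<and> last ps = v \<and> length ps = Suc n)"

definition ecc :: "'a set \<Rightarrow> ('a \<Rightarrow> 'a \<Rightarrow> bool) \<Rightarrow> 'a \<Rightarrow> nat" where
  "ecc V E v = Max (gdist V E v ` V)"

definition inner_S :: "nat \<Rightarrow> (int \<times> int) set" where
  "inner_S d = {p \<in> tri_V d. (case xyz p of (x, y, z) \<Rightarrow> x \<ge> 1 \<and> z \<ge> 1 \<and> y \<le> int d - 1)}"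

text \<open>The map (x,y,z) |-> (x-1,y-2,z-1), i.e. (a,b) |-> (a-2,b-1).\<close>
definition shift_map :: "int \<times> int \<Rightarrow> int \<times> int" where
  "shift_map p = (fst p - 2, snd p - 1)"

end

theory Submission imports Defs begin

definition hexd :: "int \<times> int \<Rightarrow> int \<times> int \<Rightarrow> int" where
  "hexd p q = max \<bar>fst p - fst q\<bar> (max \<bar>snd p - snd q\<bar> \<bar>(fst p - snd p) - (fst q - snd q)\<bar>)"

lemma Q_iff:
  fixes da db :: int
  shows "da^2 - da*db + db^2 = 1 \<longleftrightarrow> max \<bar>da\<bar> (max \<bar>db\<bar> \<bar>da - db\<bar>) = 1"
proof
  assume h: "da^2 - da*db + db^2 = 1"
  have "(2*da - db)^2 + 3*db^2 = 4" using h by (simp add: power2_eq_square algebra_simps)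
  hence "db^2 \<le> 1" by (smt (verit) zero_le_power2)
  hence b: "\<bar>db\<bar> \<le> 1" by (simp add: abs_square_le_1)
  have "(2*db - da)^2 + 3*da^2 = 4" using h by (simp add: power2_eq_square algebra_simps)
  hence "da^2 \<le> 1" by (smt (verit) zero_le_power2)
  hence a: "\<bar>da\<bar> \<le> 1" by (simp add: abs_square_le_1)
  have "da \<in> {-1,0,1}" "db \<in> {-1,0,1}" using a b by auto
  thus "max \<bar>da\<bar> (max \<bar>db\<bar> \<bar>da - db\<bar>) = 1" using h by auto
next
  assume h: "max \<bar>da\<bar> (max \<bar>db\<bar> \<bar>da - db\<bar>) = 1"
  have "da \<in> {-1,0,1}" "db \<in> {-1,0,1}" using h by auto
  thus "da^2 - da*db + db^2 = 1" using h by auto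
qed

lemma adj_iff: "tri_adj p q \<longleftrightarrow> hexd p q = 1"
proof -
  obtain a b c e where p: "p = (a,b)" and q: "q = (c,e)" by (cases p, cases q) auto
  define da where "da = a - c"
  define db where "db = b - e"
  have eq: "tri_pt p - tri_pt q = Complex (real_of_int da - real_of_int db / 2) (real_of_int db * sqrt 3 / 2)"
    by (simp add: complex_eq_iff tri_pt_def alpha1_def alpha2_def p q da_def db_def field_simps)
  have "tri_adj p q \<longleftrightarrow> (real_of_int da - real_of_int db / 2)^2 + (real_of_int db * sqrt 3 / 2)^2 = 1"
    unfolding tri_adj_def eq by (simp add: cmod_def)
  also have "(real_of_int da - real_of_int db / 2)^2 + (real_of_int db * sqrt 3 / 2)^2 = real_of_int (da^2 - da*db + db^2)"
    by (simp add: power2_eq_square algebra_simps)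
  finally have "tri_adj p q \<longleftrightarrow> real_of_int (da^2 - da*db + db^2) = 1" .
  hence "tri_adj p q \<longleftrightarrow> da^2 - da*db + db^2 = 1" by (simp only: of_int_eq_1_iff)
  also have "\<dots> \<longleftrightarrow> hexd p q = 1" unfolding Q_iff hexd_def p q da_def db_def by (simp add: algebra_simps)
  finally show ?thesis .
qed

definition Tri :: "int \<Rightarrow> int \<Rightarrow> int \<Rightarrow> (int \<times> int) set" where
  "Tri x0 z0 y1 = {(a, b). z0 \<le> b \<and> x0 \<le> a - b \<and> a \<le> y1}"

lemma hexd_le_iff: "hexd p q \<le> k \<longleftrightarrow> \<bar>fst p - fst q\<bar> \<le> k \<and> \<bar>snd p - snd q\<bar> \<le> k \<and> \<bar>(fst p - snd p) - (fst q - snd q)\<bar> \<le> k"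
  unfolding hexd_def by simp

lemma hexd_ge: "\<bar>fst p - fst q\<bar> \<le> hexd p q" "\<bar>snd p - snd q\<bar> \<le> hexd p q" "\<bar>(fst p - snd p) - (fst q - snd q)\<bar> \<le> hexd p q"
  unfolding hexd_def by simp_all

lemma hexd_tri: "hexd p r \<le> hexd p q + hexd q r"
proof -
  have "\<bar>fst p - fst r\<bar> \<le> \<bar>fst p - fst q\<bar> + \<bar>fst q - fst r\<bar>" by simp
  moreover have "\<bar>snd p - snd r\<bar> \<le> \<bar>snd p - snd q\<bar> + \<bar>snd q - snd r\<bar>" by simp
  moreover have "\<bar>(fst p - snd p) - (fst r - snd r)\<bar> \<le> \<bar>(fst p - snd p) - (fst q - snd q)\<bar> + \<bar>(fst q - snd q) - (fst r - snd r)\<bar>" by simp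
  ultimately show ?thesis unfolding hexd_le_iff using hexd_ge[of p q] hexd_ge[of q r] by linarith
qed

lemma hexd_0: "hexd p q = 0 \<Longrightarrow> p = q"
  unfolding hexd_def by (cases p, cases q) auto

lemma hexd_nonneg: "hexd p q \<ge> 0"
  unfolding hexd_def by auto

lemma walk_lb:
  assumes w: "is_walk V tri_adj ps"
  shows "i < length ps \<Longrightarrow> hexd (ps!0) (ps!i) \<le> int i"
proof (induction i)
  case 0
  then show ?case by (simp add: hexd_def)
next
  case (Suc i)
  have "tri_adj (ps!i) (ps!Suc i)" using w Suc.prems unfolding is_walk_def by blast
  hence "hexd (ps!i) (ps!Suc i) = 1" by (simp add: adj_iff)
  moreover have "hexd (ps!0) (ps!i) \<le> int i" using Suc by simp
  ultimately show ?case using hexd_tri[of "ps!0" "ps!Suc i" "ps!i"] by simp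
qed

lemma step_gen:
  assumes "w \<in> T" "hexd u w = 1" "hexd w v \<le> int n" "hexd u v = int n + 1"
  shows "\<exists>w \<in> T. hexd u w = 1 \<and> hexd w v = int n"
  using assms hexd_tri[of u v w] by (intro bexI[of _ w]) auto

lemma step_ex:
  assumes u: "u \<in> Tri x0 z0 y1" and v: "v \<in> Tri x0 z0 y1" and h: "hexd u v = int n + 1"
  shows "\<exists>w \<in> Tri x0 z0 y1. hexd u w = 1 \<and> hexd w v = int n"
proof -
  obtain a b c e where uu: "u = (a,b)" and vv: "v = (c,e)" by (cases u, cases v) auto
  have U: "z0 \<le> b" "x0 \<le> a - b" "a \<le> y1" using u uu by (auto simp: Tri_def)
  have V: "z0 \<le> e" "x0 \<le> c - e" "c \<le> y1" using v vv by (auto simp: Tri_def)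
  have H: "\<bar>a - c\<bar> \<le> int n + 1" "\<bar>b - e\<bar> \<le> int n + 1" "\<bar>(a - b) - (c - e)\<bar> \<le> int n + 1"
    using h uu vv hexd_ge[of u v] by auto
  consider "c > a" "e > b" | "c < a" "e < b" | "c > a" "e \<le> b" | "c < a" "e \<ge> b"
    | "c = a" "e > b" | "c = a" "e < b" | "c = a" "e = b" by linarith
  then show ?thesis
  proof cases
    case 1
    show ?thesis by (rule step_gen[of "(a+1,b+1)"]) (use 1 U V H h in \<open>simp_all add: Tri_def hexd_def hexd_le_iff uu vv; linarith\<close>)+
  next
    case 2
    show ?thesis by (rule step_gen[of "(a-1,b-1)"]) (use 2 U V H h in \<open>simp_all add: Tri_def hexd_def hexd_le_iff uu vv; linarith\<close>)+
  next
    case 3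
    show ?thesis by (rule step_gen[of "(a+1,b)"]) (use 3 U V H h in \<open>simp_all add: Tri_def hexd_def hexd_le_iff uu vv; linarith\<close>)+
  next
    case 4
    show ?thesis by (rule step_gen[of "(a-1,b)"]) (use 4 U V H h in \<open>simp_all add: Tri_def hexd_def hexd_le_iff uu vv; linarith\<close>)+
  next
    case 5
    show ?thesis by (rule step_gen[of "(a,b+1)"]) (use 5 U V H h in \<open>simp_all add: Tri_def hexd_def hexd_le_iff uu vv; linarith\<close>)+
  next
    case 6
    show ?thesis by (rule step_gen[of "(a,b-1)"]) (use 6 U V H h in \<open>simp_all add: Tri_def hexd_def hexd_le_iff uu vv; linarith\<close>)+
  next
    case 7
    then show ?thesis using h uu vv by (simp add: hexd_def)
  qed
qed

lemma walk_ex: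
  "\<And>u. u \<in> Tri x0 z0 y1 \<Longrightarrow> v \<in> Tri x0 z0 y1 \<Longrightarrow> hexd u v = int n \<Longrightarrow>
   \<exists>ps. is_walk (Tri x0 z0 y1) tri_adj ps \<and> hd ps = u \<and> last ps = v \<and> length ps = Suc n"
proof (induction n)
  case 0
  then have "u = v" using hexd_0 by simp
  then show ?case using 0 by (intro exI[of _ "[u]"]) (simp add: is_walk_def)
next
  case (Suc n)
  obtain w where w: "w \<in> Tri x0 z0 y1" "hexd u w = 1" "hexd w v = int n"
    using step_ex[OF Suc.prems(1,2)] Suc.prems(3) by auto
  obtain ps where ps: "is_walk (Tri x0 z0 y1) tri_adj ps" "hd ps = w" "last ps = v" "length ps = Suc n"
    using Suc.IH[OF w(1) Suc.prems(2) w(3)] by blast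
  have "is_walk (Tri x0 z0 y1) tri_adj (u # ps)"
    unfolding is_walk_def
  proof (intro conjI allI impI)
    show "set (u # ps) \<subseteq> Tri x0 z0 y1" using ps(1) Suc.prems(1) by (auto simp: is_walk_def)
  next
    fix i assume i: "Suc i < length (u # ps)"
    show "tri_adj ((u # ps) ! i) ((u # ps) ! Suc i)"
    proof (cases i)
      case 0
      then show ?thesis using ps w(2) by (cases ps) (auto simp: adj_iff)
    next
      case (Suc j)
      then show ?thesis using ps(1) i by (auto simp: is_walk_def)
    qed
  qed simp
  then show ?case using ps by (intro exI[of _ "u # ps"]) (auto simp: is_walk_def)
qed

lemma gdist_eq:
  assumes u: "u \<in> Tri x0 z0 y1" and v: "v \<in> Tri x0 z0 y1"
  shows "gdist (Tri x0 z0 y1) tri_adj u v = nat (hexd u v)"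
  unfolding gdist_def
proof (rule Least_equality)
  show "\<exists>ps. is_walk (Tri x0 z0 y1) tri_adj ps \<and> hd ps = u \<and> last ps = v \<and> length ps = Suc (nat (hexd u v))"
    using walk_ex[OF u v] hexd_nonneg[of u v] by simp
next
  fix m assume "\<exists>ps. is_walk (Tri x0 z0 y1) tri_adj ps \<and> hd ps = u \<and> last ps = v \<and> length ps = Suc m"
  then obtain ps where ps: "is_walk (Tri x0 z0 y1) tri_adj ps" "hd ps = u" "last ps = v" "length ps = Suc m" by blast
  have "hexd (ps!0) (ps!m) \<le> int m" using walk_lb[OF ps(1)] ps(4) by simp
  moreover have "ps!0 = u" using ps(2,4) by (cases ps) auto
  moreover have "ps!m = v" using ps(3,4) last_conv_nth[of ps] by (cases ps) auto
  ultimately show "nat (hexd u v) \<le> m" by simp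
qed

definition eccf :: "int \<Rightarrow> int \<Rightarrow> int \<Rightarrow> int \<times> int \<Rightarrow> int" where
  "eccf x0 z0 y1 v = max (fst v - x0 - z0) (max (y1 - z0 - (fst v - snd v)) (y1 - x0 - snd v))"

lemma Tri_finite: "finite (Tri x0 z0 y1)"
proof -
  have "Tri x0 z0 y1 \<subseteq> {x0+z0..y1} \<times> {z0..y1-x0}" by (auto simp: Tri_def)
  thus ?thesis by (rule finite_subset) auto
qed

lemma ecc_eq:
  assumes v: "v \<in> Tri x0 z0 y1"
  shows "ecc (Tri x0 z0 y1) tri_adj v = nat (eccf x0 z0 y1 v)"
proof -
  obtain a b where vv: "v = (a,b)" by (cases v)
  have V: "z0 \<le> b" "x0 \<le> a - b" "a \<le> y1" using v vv by (auto simp: Tri_def)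
  have "gdist (Tri x0 z0 y1) tri_adj v ` Tri x0 z0 y1 = (\<lambda>w. nat (hexd v w)) ` Tri x0 z0 y1"
    using gdist_eq[OF v] by auto
  moreover have "Max ((\<lambda>w. nat (hexd v w)) ` Tri x0 z0 y1) = nat (eccf x0 z0 y1 v)"
  proof (rule Max_eqI)
    show "finite ((\<lambda>w. nat (hexd v w)) ` Tri x0 z0 y1)" using Tri_finite by simp
  next
    fix y assume "y \<in> (\<lambda>w. nat (hexd v w)) ` Tri x0 z0 y1"
    then obtain c e where w: "(c,e) \<in> Tri x0 z0 y1" and y: "y = nat (hexd v (c,e))" by auto
    have W: "z0 \<le> e" "x0 \<le> c - e" "c \<le> y1" using w by (auto simp: Tri_def)
    have "hexd v (c,e) \<le> eccf x0 z0 y1 v"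
      unfolding hexd_le_iff eccf_def vv using V W by simp linarith
    thus "y \<le> nat (eccf x0 z0 y1 v)" using y by simp
  next
    have c1: "(x0+z0, z0) \<in> Tri x0 z0 y1" "(y1, z0) \<in> Tri x0 z0 y1" "(y1, y1-x0) \<in> Tri x0 z0 y1"
      using V by (auto simp: Tri_def)
    have d1: "hexd v (x0+z0, z0) = a - x0 - z0" using V unfolding vv hexd_def by simp
    have d2: "hexd v (y1, z0) = y1 - z0 - (a - b)" using V unfolding vv hexd_def by simp
    have d3: "hexd v (y1, y1-x0) = y1 - x0 - b" using V unfolding vv hexd_def by simp
    have "eccf x0 z0 y1 v = a - x0 - z0 \<or> eccf x0 z0 y1 v = y1 - z0 - (a - b) \<or> eccf x0 z0 y1 v = y1 - x0 - b"
      unfolding eccf_def vv by simp linarith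
    thus "nat (eccf x0 z0 y1 v) \<in> (\<lambda>w. nat (hexd v w)) ` Tri x0 z0 y1"
      using c1 d1 d2 d3 by (metis image_eqI)
  qed
  ultimately show ?thesis unfolding ecc_def by simp
qed

lemma triV_Tri: "tri_V d = Tri 0 0 (int d)"
  unfolding tri_V_def Tri_def by auto

lemma inner_Tri: "inner_S d = Tri 1 1 (int d - 1)"
  unfolding inner_S_def tri_V_def Tri_def xyz_def by auto

theorem mainTheorem11:
  fixes d :: nat
  assumes "d \<ge> 3"
  shows "bij_betw shift_map (inner_S d) (tri_V (d - 3))
     \<and> (\<forall>u\<in>inner_S d. \<forall>v\<in>inner_S d. tri_adj u v \<longleftrightarrow> tri_adj (shift_map u) (shift_map v))
     \<and> (\<forall>v\<in>inner_S d. ecc (tri_V d) tri_adj v = ecc (inner_S d) tri_adj v + 2)"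
proof (intro conjI ballI)
  have dd: "int (d - 3) = int d - 3" using assms by simp
  show "bij_betw shift_map (inner_S d) (tri_V (d - 3))"
  proof (rule bij_betw_byWitness[where f' = "\<lambda>p. (fst p + 2, snd p + 1)"])
    show "\<forall>a\<in>inner_S d. (fst (shift_map a) + 2, snd (shift_map a) + 1) = a"
      by (auto simp: shift_map_def)
    show "\<forall>a\<in>tri_V (d - 3). shift_map (fst a + 2, snd a + 1) = a"
      by (auto simp: shift_map_def)
    show "shift_map ` inner_S d \<subseteq> tri_V (d - 3)"
      unfolding inner_Tri triV_Tri dd by (auto simp: shift_map_def Tri_def)
    show "(\<lambda>p. (fst p + 2, snd p + 1)) ` tri_V (d - 3) \<subseteq> inner_S d"
      unfolding inner_Tri triV_Tri dd by (auto simp: Tri_def)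
  qed
next
  fix u v assume "u \<in> inner_S d" "v \<in> inner_S d"
  show "tri_adj u v \<longleftrightarrow> tri_adj (shift_map u) (shift_map v)"
    proof -
    have "hexd (shift_map u) (shift_map v) = hexd u v" by (simp add: hexd_def shift_map_def algebra_simps)
    thus ?thesis by (simp add: adj_iff)
  qed
next
  fix v assume v: "v \<in> inner_S d"
  hence v1: "v \<in> Tri 1 1 (int d - 1)" by (simp add: inner_Tri)
  hence v0: "v \<in> Tri 0 0 (int d)" by (auto simp: Tri_def)
  have "eccf 1 1 (int d - 1) v \<ge> 0" using v1 by (auto simp: Tri_def eccf_def)
  moreover have "eccf 0 0 (int d) v = eccf 1 1 (int d - 1) v + 2" by (simp add: eccf_def)
  ultimately show "ecc (tri_V d) tri_adj v = ecc (inner_S d) tri_adj v + 2"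
    unfolding triV_Tri inner_Tri ecc_eq[OF v0] ecc_eq[OF v1] by simp
qed

end
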